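(* Let $(a_{i,j})_{(i,j)\in J}$ be an array of random variables in a unital complex C$^*$-algebra $\mathcal{A}$ which is strongly matricially free with respect to $(\varphi_{i,j})$, with internal units $(1_{i,j})$ generating the unital C$^*$-subalgebra $\mathcal{I}$, and let $R_{i,j}$ be the R-transform of the distribution $\mu_{i,j}$ of $a_{i,j}$ in the state $\varphi_{i,j}$. Let $A=\sum_{(i,j)\in J}a_{i,j}$. Then $$\mathcal{R}_A(z)=\sum_{(i,j)\in J}R_{i,j}(z)1_{i,j},$$ for sufficiently small $|z|$, is an operatorial R-transform of the $\varphi$-distribution of $A$.
   Context: Strong matricial freeness: $J\subseteq\{1,2\}\times\{1,2\}$; $\varphi$ is a distinguished state on $\mathcal{A}$; for each $j$, $\varphi_j(a)=\varphi(b_j^*ab_j)$ with a fixed $b_j\in\mathcal{A}_{j,j}\cap\ker\varphi$, $\varphi(b_j^*b_j)=1$; $\varphi_{j,j}=\varphi$ and $\varphi_{i,j}=\varphi_j$ for $i\neq j$. The array $(a_{i,j})$ is strongly matricially free w.r.t. $(\varphi_{i,j})$ if there are projections $1_{i,j}$ (internal units) generating a commutative unital subalgebra $\mathcal{I}$ such that the C$^*$-subalgebras $\mathcal{A}_{i,j}$ generated by $a_{i,j},a_{i,j}^*,1_{i,j}$ (in which $1_{i,j}$ is a unit) satisfy: (a) $\varphi(u_1au_2)=\varphi(u_1)\varphi(a)\varphi(u_2)$ for $a\in\mathcal{A}$, $u_1,u_2\in\mathcal{I}$; (b) $\varphi(1_{i,j})=\delta_{i,j}$; (c) with $\Gamma=\bigcup_m\{((i_1,i_2),(i_2,i_3),\dots,(i_m,i_{m+1})):i_1\ne\dots\ne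 i_m\}$, whenever $(i_1,j_1)\ne\dots\ne(i_m,j_m)$, $a_k\in\mathcal{A}_{i_k,j_k}\cap\ker\varphi_{i_k,j_k}$ ($1<k\le m$), $a\in\mathcal{A}$: $\varphi(a1_{i_1,j_1}a_2\cdots a_m)=\varphi(aa_2\cdots a_m)$ if the tuple of pairs lies in $\Gamma$, else $0$; (d) $\varphi(a_1\cdots a_n)=0$ whenever $a_k\in\mathcal{A}_{i_k,j_k}\cap\ker\varphi_{i_k,j_k}$ and $(i_1,j_1)\ne\dots\ne(i_n,j_n)$. Scalar R-transform: for a distribution (moment sequence $m_n=\omega(x^n)$), $G(w)=\sum_n m_nw^{-n-1}$ and $R$ is the power series analytic near $0$ with $G(1/z+R(z))=z$ for small $|z|>0$. Operatorial Cauchy transform: for $a\in\mathcal{A}$ and invertible $b\in\mathcal{I}$ with $\|b^{-1}\|<\|a\|^{-1}$, $\mathcal{G}_a(b)=\sum_{n\ge0}\varphi(b^{-1}(ab^{-1})^n)$. An operatorial R-transform of the $\varphi$-distribution of $a$ is an $\mathcal{I}$-valued power series $\mathcal{R}_a(z)=\sum_{n\ge1}c_nz^{n-1}$, $c_n\in\mathcal{I}$, norm convergent for small $|z|$, with $\mathcal{G}_a(\frac1z+\mathcal{R}_a(z))=z$ for all sufficiently small positive $|z|$. (The series in the claim is called the matricial R-transform.) *)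

theory Defs
  imports "HOL-Analysis.Analysis"
begin

text \<open>A unital complex C*-algebra is modelled on a type 'a that is a real Banach algebra
 with unit (norm 1 = 1), together with an explicit complex scalar multiplication sc
 (extending the real one) and an involution star satisfying the C*-identity.\<close>

definition unital_cstar_algebra ::
  "(complex \<Rightarrow> 'a::{real_normed_algebra_1,banach} \<Rightarrow> 'a) \<Rightarrow> ('a \<Rightarrow> 'a) \<Rightarrow> bool" where
  "unital_cstar_algebra sc star \<longleftrightarrow>
     (\<forall>c d x. sc (c + d) x = sc c x + sc d x) \<and>
     (\<forall>c x y. sc c (x + y) = sc c x + sc c y) \<and>
     (\<forall>c d x. sc c (sc d x) = sc (c * d) x) \<and>
     (\<forall>r x. sc (complex_of_real r) x = r *\<^sub>R x) \<and>
     (\<forall>c x. norm (sc c x) = cmod c * norm x) \<and>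
     (\<forall>c x y. sc c (x * y) = sc c x * y \<and> sc c (x * y) = x * sc c y) \<and>
     (\<forall>x. star (star x) = x) \<and>
     (\<forall>x y. star (x + y) = star x + star y) \<and>
     (\<forall>c x. star (sc c x) = sc (cnj c) (star x)) \<and>
     (\<forall>x y. star (x * y) = star y * star x) \<and>
     (\<forall>x. norm (star x * x) = (norm x)\<^sup>2)"

definition is_state ::
  "(complex \<Rightarrow> 'a::{real_normed_algebra_1,banach} \<Rightarrow> 'a) \<Rightarrow> ('a \<Rightarrow> 'a) \<Rightarrow> ('a \<Rightarrow> complex) \<Rightarrow> bool" where
  "is_state sc star \<phi> \<longleftrightarrow>
     (\<forall>x y. \<phi> (x + y) = \<phi> x + \<phi> y) \<and>
     (\<forall>c x. \<phi> (sc c x) = c * \<phi> x) \<and>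
     (\<forall>x. Im (\<phi> (star x * x)) = 0 \<and> Re (\<phi> (star x * x)) \<ge> 0) \<and>
     \<phi> 1 = 1"

definition cstar_gen ::
  "(complex \<Rightarrow> 'a::{real_normed_algebra_1,banach} \<Rightarrow> 'a) \<Rightarrow> ('a \<Rightarrow> 'a) \<Rightarrow> 'a set \<Rightarrow> 'a set" where
  "cstar_gen sc star S = \<Inter>{B. S \<subseteq> B \<and> 0 \<in> B \<and> closed B \<and>
       (\<forall>x\<in>B. \<forall>y\<in>B. x + y \<in> B \<and> x * y \<in> B) \<and>
       (\<forall>c. \<forall>x\<in>B. sc c x \<in> B) \<and> (\<forall>x\<in>B. star x \<in> B)}"

definition mstate ::
  "('a::{real_normed_algebra_1,banach} \<Rightarrow> 'a) \<Rightarrow> ('a \<Rightarrow> complex) \<Rightarrow> (nat \<Rightarrow> 'a) \<Rightarrow> nat \<times> nat \<Rightarrow> 'a \<Rightarrow> complex" where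
  "mstate star \<phi> b p x = (if fst p = snd p then \<phi> x else \<phi> (star (b (snd p)) * x * b (snd p)))"

definition alt_distinct :: "'b list \<Rightarrow> bool" where
  "alt_distinct ps \<longleftrightarrow> (\<forall>k. Suc k < length ps \<longrightarrow> ps ! k \<noteq> ps ! Suc k)"

definition in_Gamma :: "(nat \<times> nat) list \<Rightarrow> bool" where
  "in_Gamma ps \<longleftrightarrow> ps \<noteq> [] \<and>
     (\<forall>k. Suc k < length ps \<longrightarrow> snd (ps ! k) = fst (ps ! Suc k) \<and> fst (ps ! k) \<noteq> fst (ps ! Suc k))"

definition strongly_matricially_free ::
  "(complex \<Rightarrow> 'a::{real_normed_algebra_1,banach} \<Rightarrow> 'a) \<Rightarrow> ('a \<Rightarrow> 'a) \<Rightarrow> ('a \<Rightarrow> complex) \<Rightarrow>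
   (nat \<Rightarrow> 'a) \<Rightarrow> (nat \<times> nat) set \<Rightarrow> (nat \<times> nat \<Rightarrow> 'a) \<Rightarrow> (nat \<times> nat \<Rightarrow> 'a) \<Rightarrow> bool" where
  "strongly_matricially_free sc star \<phi> b J a u \<longleftrightarrow>
    (let I = cstar_gen sc star (insert 1 (u ` J));
         Alg = (\<lambda>p. cstar_gen sc star {a p, star (a p), u p});
         \<psi> = mstate star \<phi> b in
     \<comment> \<open>internal units: projections generating a commutative algebra I\<close>
     (\<forall>p\<in>J. star (u p) = u p \<and> u p * u p = u p) \<and>
     (\<forall>x\<in>I. \<forall>y\<in>I. x * y = y * x) \<and>
     \<comment> \<open>u p is a unit of Alg p\<close>
     (\<forall>p\<in>J. \<forall>x\<in>Alg p. u p * x = x \<and> x * u p = x) \<and>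
     \<comment> \<open>the elements b_j\<close>
     (\<forall>p\<in>J. fst p \<noteq> snd p \<longrightarrow>
        (snd p, snd p) \<in> J \<and> b (snd p) \<in> Alg (snd p, snd p) \<and> \<phi> (b (snd p)) = 0 \<and>
        \<phi> (star (b (snd p)) * b (snd p)) = 1) \<and>
     \<comment> \<open>(a)\<close>
     (\<forall>x u1 u2. u1 \<in> I \<longrightarrow> u2 \<in> I \<longrightarrow> \<phi> (u1 * x * u2) = \<phi> u1 * \<phi> x * \<phi> u2) \<and>
     \<comment> \<open>(b)\<close>
     (\<forall>p\<in>J. \<phi> (u p) = (if fst p = snd p then 1 else 0)) \<and>
     \<comment> \<open>(c)\<close>
     (\<forall>p qs ys x. qs \<noteq> [] \<longrightarrow> set (p # qs) \<subseteq> J \<longrightarrow> alt_distinct (p # qs) \<longrightarrow>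
        length ys = length qs \<longrightarrow>
        (\<forall>k<length qs. ys ! k \<in> Alg (qs ! k) \<and> \<psi> (qs ! k) (ys ! k) = 0) \<longrightarrow>
        \<phi> (x * u p * prod_list ys) =
          (if in_Gamma (p # qs) then \<phi> (x * prod_list ys) else 0)) \<and>
     \<comment> \<open>(d)\<close>
     (\<forall>ps xs. ps \<noteq> [] \<longrightarrow> set ps \<subseteq> J \<longrightarrow> alt_distinct ps \<longrightarrow> length xs = length ps \<longrightarrow>
        (\<forall>k<length ps. xs ! k \<in> Alg (ps ! k) \<and> \<psi> (ps ! k) (xs ! k) = 0) \<longrightarrow>
        \<phi> (prod_list xs) = 0))"

definition scalar_R_transform :: "(nat \<Rightarrow> complex) \<Rightarrow> (complex \<Rightarrow> complex) \<Rightarrow> bool" where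
  "scalar_R_transform m R \<longleftrightarrow>
     (\<exists>r \<epsilon>. \<epsilon> > 0 \<and> (\<forall>z. cmod z < \<epsilon> \<longrightarrow> (\<lambda>n. r n * z ^ n) sums R z)) \<and>
     (\<forall>\<^sub>F z in at 0. (\<lambda>n. m n * inverse (1 / z + R z) ^ Suc n) sums z)"

definition op_R_transform ::
  "(complex \<Rightarrow> 'a::{real_normed_algebra_1,banach} \<Rightarrow> 'a) \<Rightarrow> ('a \<Rightarrow> complex) \<Rightarrow> 'a set \<Rightarrow> 'a \<Rightarrow>
   (complex \<Rightarrow> 'a) \<Rightarrow> bool" where
  "op_R_transform sc \<phi> I x Rop \<longleftrightarrow>
     (\<exists>c \<epsilon>. \<epsilon> > 0 \<and> (\<forall>n. c (Suc n) \<in> I) \<and>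
        (\<forall>z. cmod z < \<epsilon> \<longrightarrow> summable (\<lambda>n. norm (sc (z ^ n) (c (Suc n)))) \<and>
                                (\<lambda>n. sc (z ^ n) (c (Suc n))) sums Rop z)) \<and>
     (\<forall>\<^sub>F z in at 0. \<exists>binv.
        sc (1 / z) 1 + Rop z \<in> I \<and>
        (sc (1 / z) 1 + Rop z) * binv = 1 \<and> binv * (sc (1 / z) 1 + Rop z) = 1 \<and>
        norm binv * norm x < 1 \<and>
        (\<lambda>n. \<phi> (binv * (x * binv) ^ n)) sums z)"

end

theory Submission
  imports Defs "HOL-Computational_Algebra.Formal_Power_Series"
begin

lemma neumann:
  fixes x :: "'a::{real_normed_algebra_1,banach}"
  assumes "norm x < 1"
  shows "summable (\<lambda>n. norm (x ^ n))" "(\<lambda>n. x ^ n) sums (\<Sum>n. x ^ n)"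
    "(1 - x) * (\<Sum>n. x ^ n) = 1" "(\<Sum>n. x ^ n) * (1 - x) = 1"
    "norm (\<Sum>n. x ^ n) \<le> 1 / (1 - norm x)"
proof -
  have g: "summable (\<lambda>n. norm x ^ n)" using assms by (intro summable_geometric) simp
  show sn: "summable (\<lambda>n. norm (x ^ n))"
    by (rule summable_comparison_test[OF _ g]) (auto intro: norm_power_ineq)
  then have s: "summable (\<lambda>n. x ^ n)" by (rule summable_norm_cancel)
  then show ss: "(\<lambda>n. x ^ n) sums (\<Sum>n. x ^ n)" by (rule summable_sums)
  have lim0: "(\<lambda>n. x ^ n) \<longlonglongrightarrow> 0" using s by (rule summable_LIMSEQ_zero)
  have tel0: "(\<Sum>k<n. x ^ k) * (1 - x) = 1 - x ^ n" for n
  proof (induction n)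
    case (Suc n) then show ?case by (simp add: distrib_right) (simp add: algebra_simps power_Suc2 power_commutes)
  qed simp
  have tel: "(\<Sum>k<n. x ^ k) - (\<Sum>k<n. x ^ k) * x = 1 - x ^ n" for n
    using tel0[of n] by (simp add: algebra_simps)
  have tel1: "(1 - x) * (\<Sum>k<n. x ^ k) = 1 - x ^ n" for n
  proof (induction n)
    case (Suc n) then show ?case by (simp add: distrib_left) (simp add: algebra_simps)
  qed simp
  have tel2: "(\<Sum>k<n. x ^ k) - x * (\<Sum>k<n. x ^ k) = 1 - x ^ n" for n
    using tel1[of n] by (simp add: algebra_simps)
  have ps: "(\<lambda>n. \<Sum>k<n. x ^ k) \<longlonglongrightarrow> (\<Sum>n. x ^ n)" using ss by (simp add: sums_def)
  have "(\<lambda>n. (\<Sum>k<n. x ^ k) - (\<Sum>k<n. x ^ k) * x) \<longlonglongrightarrow> (\<Sum>n. x ^ n) - (\<Sum>n. x ^ n) * x"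
    by (intro tendsto_intros ps)
  moreover have "(\<lambda>n. 1 - x ^ n) \<longlonglongrightarrow> 1 - 0" by (intro tendsto_intros lim0)
  ultimately have "(\<Sum>n. x ^ n) - (\<Sum>n. x ^ n) * x = 1" unfolding tel by (simp add: LIMSEQ_unique)
  then show "(\<Sum>n. x ^ n) * (1 - x) = 1" by (simp add: algebra_simps)
  have "(\<lambda>n. (\<Sum>k<n. x ^ k) - x * (\<Sum>k<n. x ^ k)) \<longlonglongrightarrow> (\<Sum>n. x ^ n) - x * (\<Sum>n. x ^ n)"
    by (intro tendsto_intros ps)
  moreover have "(\<lambda>n. 1 - x ^ n) \<longlonglongrightarrow> 1 - 0" by (intro tendsto_intros lim0)
  ultimately have "(\<Sum>n. x ^ n) - x * (\<Sum>n. x ^ n) = 1" unfolding tel2 by (simp add: LIMSEQ_unique)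
  then show "(1 - x) * (\<Sum>n. x ^ n) = 1" by (simp add: algebra_simps)
  have "norm (\<Sum>n. x ^ n) \<le> (\<Sum>n. norm (x ^ n))" by (rule summable_norm[OF sn])
  also have "\<dots> \<le> (\<Sum>n. norm x ^ n)"
    by (intro suminf_le sn g) (simp add: norm_power_ineq)
  also have "\<dots> = 1 / (1 - norm x)" using assms by (simp add: suminf_geometric)
  finally show "norm (\<Sum>n. x ^ n) \<le> 1 / (1 - norm x)" .
qed

locale cstar =
  fixes sc :: "complex \<Rightarrow> 'a::{real_normed_algebra_1,banach} \<Rightarrow> 'a" and star :: "'a \<Rightarrow> 'a"
  assumes alg: "unital_cstar_algebra sc star"
begin

lemma sc_add_left: "sc (c + d) x = sc c x + sc d x" using alg by (simp add: unital_cstar_algebra_def)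
lemma sc_add_right: "sc c (x + y) = sc c x + sc c y" using alg by (simp add: unital_cstar_algebra_def)
lemma sc_sc: "sc c (sc d x) = sc (c * d) x" using alg by (simp add: unital_cstar_algebra_def)
lemma sc_real: "sc (complex_of_real r) x = r *\<^sub>R x" using alg by (simp add: unital_cstar_algebra_def)
lemma norm_sc: "norm (sc c x) = cmod c * norm x" using alg by (simp add: unital_cstar_algebra_def)
lemma sc_mult_both: "sc c (x * y) = sc c x * y \<and> sc c (x * y) = x * sc c y"
  using alg unfolding unital_cstar_algebra_def by (elim conjE) (rule spec[of _ y], rule spec[of _ x], rule spec[of _ c])
lemma sc_mult_left: "sc c (x * y) = sc c x * y" using sc_mult_both by blast
lemma sc_mult_right: "sc c (x * y) = x * sc c y" using sc_mult_both by blast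
lemma star_star[simp]: "star (star x) = x" using alg by (simp add: unital_cstar_algebra_def)
lemma star_add: "star (x + y) = star x + star y" using alg by (simp add: unital_cstar_algebra_def)
lemma star_sc: "star (sc c x) = sc (cnj c) (star x)" using alg by (simp add: unital_cstar_algebra_def)
lemma star_mult: "star (x * y) = star y * star x" using alg by (simp add: unital_cstar_algebra_def)
lemma cstar_id: "norm (star x * x) = (norm x)\<^sup>2" using alg by (simp add: unital_cstar_algebra_def)

lemma sc_one[simp]: "sc 1 x = x" using sc_real[of 1 x] by simp
lemma sc_zero[simp]: "sc 0 x = 0" using sc_real[of 0 x] by simp
lemma sc_0_right[simp]: "sc c 0 = 0" using sc_add_right[of c 0 0] by simp
lemma sc_scaleR: "sc c (r *\<^sub>R x) = r *\<^sub>R sc c x"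
  by (metis mult.commute sc_real sc_sc)
lemma sc_minus_right: "sc c (- x) = - sc c x"
  using sc_add_right[of c x "-x"] add.inverse_unique[of "sc c x" "sc c (-x)"] by simp
lemma sc_diff_right: "sc c (x - y) = sc c x - sc c y"
  using sc_add_right[of c x "-y"] by (simp add: sc_minus_right)
lemma sc_minus_left: "sc (- c) x = - sc c x"
  using sc_add_left[of c "-c" x] add.inverse_unique[of "sc c x" "sc (-c) x"] by simp
lemma sc_diff_left: "sc (c - d) x = sc c x - sc d x"
  using sc_add_left[of c "-d" x] by (simp add: sc_minus_left)
lemma bl_sc: "bounded_linear (sc c)"
  by (rule bounded_linear_intro[where K="cmod c"]) (auto simp: sc_add_right sc_scaleR norm_sc)
lemma sc_sum_right: "sc c (sum f A) = (\<Sum>i\<in>A. sc c (f i))"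
  by (rule linear_sum[OF bounded_linear.linear[OF bl_sc]])
lemma sc_sum_left: "sc (sum f A) x = (\<Sum>i\<in>A. sc (f i) x)"
  by (induction A rule: infinite_finite_induct) (auto simp: sc_add_left)
lemma sc_power_mult: "sc c (x ^ Suc n) = sc c x * x ^ n"
  by (simp add: sc_mult_left)

lemma star_zero[simp]: "star 0 = 0" using star_add[of 0 0] by simp
lemma star_minus: "star (- x) = - star x"
  using star_add[of x "-x"] add.inverse_unique[of "star x" "star (-x)"] by simp
lemma star_diff: "star (x - y) = star x - star y"
  using star_add[of x "-y"] by (simp add: star_minus)
lemma star_scaleR: "star (r *\<^sub>R x) = r *\<^sub>R star x"
  using star_sc[of "complex_of_real r" x] by (simp add: sc_real)
lemma star_one[simp]: "star 1 = 1"
proof -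
  have "star x = star 1 * star x" for x using star_mult[of x 1] by simp
  from this[of "star 1"] show ?thesis by simp
qed
lemma norm_star_le: "norm x \<le> norm (star x)"
proof (cases "x = 0")
  case False
  have "(norm x)^2 \<le> norm (star x) * norm x" using cstar_id[of x] norm_mult_ineq[of "star x" x] by simp
  then show ?thesis using False by (simp add: power2_eq_square)
qed simp
lemma norm_star[simp]: "norm (star x) = norm x"
  using norm_star_le[of x] norm_star_le[of "star x"] by simp
lemma bl_star: "bounded_linear star"
  by (rule bounded_linear_intro[where K=1]) (auto simp: star_add star_scaleR)
lemma star_power: "star (x ^ n) = star x ^ n"
  by (induction n) (auto simp: star_mult power_Suc2 power_commutes)


lemma gbin_half_bound: "\<bar>(1/2::real) gchoose n\<bar> \<le> 1"
proof (induction n)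
  case (Suc n)
  have e: "(1/2::real) * ((1/2) gchoose n) = of_nat n * ((1/2) gchoose n) + of_nat (Suc n) * ((1/2) gchoose Suc n)"
    by (rule gbinomial_mult_1)
  then have "((1/2::real) gchoose Suc n) = (1/2 - of_nat n) / of_nat (Suc n) * ((1/2) gchoose n)"
    by (simp add: field_simps)
  moreover have "\<bar>(1/2 - of_nat n) / of_nat (Suc n)\<bar> \<le> (1::real)" by (simp add: abs_le_iff divide_le_eq le_divide_eq)
  ultimately have "\<bar>(1/2::real) gchoose Suc n\<bar> = \<bar>(1/2 - of_nat n) / of_nat (Suc n)\<bar> * \<bar>(1/2) gchoose n\<bar>"
    by (simp add: abs_mult)
  also have "\<dots> \<le> 1 * 1" by (intro mult_mono Suc.IH) (use \<open>\<bar>(1/2 - of_nat n) / of_nat (Suc n)\<bar> \<le> (1::real)\<close> in auto)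
  finally show ?case by simp
qed simp

lemma gbin_conv: "(\<Sum>i\<le>k. ((1/2::real) gchoose i) * ((1/2) gchoose (k - i))) = (if k = 0 then 1 else if k = 1 then 1 else 0)"
proof -
  have "(\<Sum>i\<le>k. ((1/2::real) gchoose i) * ((1/2) gchoose (k - i))) = (1/2 + 1/2) gchoose k"
    using gbinomial_Vandermonde[of "1/2::real" "1/2" k] by (simp add: atLeast0AtMost)
  also have "\<dots> = (of_nat 1 :: real) gchoose k" by simp
  also have "\<dots> = of_nat (1 choose k)" by (simp only: binomial_gbinomial)
  also have "\<dots> = (if k = 0 then 1 else if k = 1 then 1 else 0)"
    by (cases k) (auto simp: binomial_eq_0)
  finally show ?thesis .
qed

lemma sqrt_exists:
  assumes sa: "star h = h" and nh: "norm h < 1"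
  shows "\<exists>y. star y * y = 1 - h"
proof -
  define g where "g n = ((1/2::real) gchoose n) * (-1) ^ n" for n
  define t where "t n = g n *\<^sub>R h ^ n" for n
  have gb: "\<bar>g n\<bar> \<le> 1" for n using gbin_half_bound[of n] by (simp add: g_def abs_mult)
  have geo: "summable (\<lambda>n. norm h ^ n)" using nh by (intro summable_geometric) simp
  have tn: "norm (t n) \<le> norm h ^ n" for n
  proof -
    have "norm (t n) = \<bar>g n\<bar> * norm (h ^ n)" by (simp add: t_def)
    also have "\<dots> \<le> 1 * norm h ^ n"
      by (intro mult_mono gb norm_power_ineq) auto
    finally show ?thesis by simp
  qed
  have st: "summable (\<lambda>n. norm (t n))"
    by (rule summable_comparison_test[OF _ geo]) (use tn in auto)
  define y where "y = (\<Sum>n. t n)"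
  have "star y = (\<Sum>n. star (t n))"
    unfolding y_def by (rule bounded_linear.suminf[OF bl_star summable_norm_cancel[OF st]])
  also have "\<dots> = y" by (simp add: y_def t_def star_scaleR star_power sa)
  finally have sy: "star y = y" .
  have cp: "(\<lambda>k. \<Sum>i\<le>k. t i * t (k - i)) sums (y * y)"
    unfolding y_def by (rule Cauchy_product_sums[OF st st])
  have coef: "(\<Sum>i\<le>k. t i * t (k - i)) = (if k = 0 then 1 else if k = 1 then - h else 0)" for k
  proof -
    have "(\<Sum>i\<le>k. t i * t (k - i)) = (\<Sum>i\<le>k. (((1/2::real) gchoose i) * ((1/2) gchoose (k - i)) * (-1)^k) *\<^sub>R h ^ k)"
    proof (rule sum.cong[OF refl])
      fix i assume "i \<in> {..k}"
      then have ik: "i \<le> k" by simp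
      then have "h ^ i * h ^ (k - i) = h ^ k" by (metis le_add_diff_inverse power_add)
      moreover have "(-1::real) ^ i * (-1) ^ (k - i) = (-1) ^ k" using ik by (metis le_add_diff_inverse power_add)
      ultimately show "t i * t (k - i) = (((1/2::real) gchoose i) * ((1/2) gchoose (k - i)) * (-1)^k) *\<^sub>R h ^ k"
        by (simp add: t_def g_def scaleR_scaleR mult_ac)
    qed
    also have "\<dots> = ((\<Sum>i\<le>k. ((1/2::real) gchoose i) * ((1/2) gchoose (k - i))) * (-1)^k) *\<^sub>R h ^ k"
      by (simp add: scaleR_sum_left sum_distrib_right)
    also have "\<dots> = (if k = 0 then 1 else if k = 1 then - h else 0)"
      by (simp add: gbin_conv)
    finally show ?thesis .
  qed
  have "(\<lambda>k. if k = 0 then 1 else if k = 1 then - h else (0::'a)) sums (\<Sum>k\<in>{0,1::nat}. if k = 0 then 1 else if k = 1 then - h else (0::'a))"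
    using sums_finite[of "{0,1::nat}" "\<lambda>k. if k = 0 then 1 else if k = 1 then - h else (0::'a)"] by auto
  then have "(\<lambda>k. \<Sum>i\<le>k. t i * t (k - i)) sums (1 - h)" by (simp add: coef)
  with cp have "y * y = 1 - h" using sums_unique2 by blast
  then show ?thesis using sy by metis
qed

end

locale cstate = cstar sc star for sc :: "complex \<Rightarrow> 'a::{real_normed_algebra_1,banach} \<Rightarrow> 'a" and star +
  fixes \<phi> :: "'a \<Rightarrow> complex"
  assumes state: "is_state sc star \<phi>"
begin

lemma phi_add: "\<phi> (x + y) = \<phi> x + \<phi> y" using state by (simp add: is_state_def)
lemma phi_sc: "\<phi> (sc c x) = c * \<phi> x" using state by (simp add: is_state_def)
lemma phi_pos: "Im (\<phi> (star x * x)) = 0 \<and> Re (\<phi> (star x * x)) \<ge> 0" using state by (simp add: is_state_def)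
lemma phi_one[simp]: "\<phi> 1 = 1" using state by (simp add: is_state_def)
lemma phi_zero[simp]: "\<phi> 0 = 0" using phi_add[of 0 0] by simp
lemma phi_minus: "\<phi> (- x) = - \<phi> x" using phi_add[of x "-x"] add.inverse_unique[of "\<phi> x" "\<phi> (-x)"] by simp
lemma phi_diff: "\<phi> (x - y) = \<phi> x - \<phi> y" using phi_add[of x "-y"] by (simp add: phi_minus)
lemma phi_scaleR: "\<phi> (r *\<^sub>R x) = complex_of_real r * \<phi> x" using phi_sc[of "complex_of_real r" x] by (simp add: sc_real)
lemma phi_sum: "\<phi> (sum f A) = (\<Sum>i\<in>A. \<phi> (f i))"
  by (induction A rule: infinite_finite_induct) (auto simp: phi_add)

lemma selfadj_small:
  assumes sa: "star t = t" and nt: "norm t < 1"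
  shows "Im (\<phi> t) = 0 \<and> Re (\<phi> t) \<le> 1"
proof -
  obtain y where "star y * y = 1 - t" using sqrt_exists[OF sa nt] by blast
  then have "Im (\<phi> (1 - t)) = 0 \<and> Re (\<phi> (1 - t)) \<ge> 0" using phi_pos[of y] by simp
  then show ?thesis by (simp add: phi_diff)
qed

lemma selfadj_bound:
  assumes sa: "star h = h"
  shows "Im (\<phi> h) = 0 \<and> \<bar>Re (\<phi> h)\<bar> \<le> norm h"
proof -
  have main: "Im (\<phi> h) = 0 \<and> \<bar>Re (\<phi> h)\<bar> \<le> c" if c: "c > norm h" for c
  proof -
    have cp: "c > 0" using c norm_ge_zero[of h] by linarith
    define t where "t = (1/c) *\<^sub>R h"
    have st: "star t = t" "star (-t) = -t" by (simp_all add: t_def star_scaleR sa star_minus)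
    have nt: "norm t < 1" "norm (-t) < 1" using c cp by (simp_all add: t_def)
    have pt: "\<phi> t = complex_of_real (1/c) * \<phi> h" by (simp add: t_def phi_scaleR)
    from selfadj_small[OF st(1) nt(1)] selfadj_small[OF st(2) nt(2)]
    have "Im (\<phi> t) = 0" "Re (\<phi> t) \<le> 1" "- Re (\<phi> t) \<le> 1" by (simp_all add: phi_minus)
    then have "Im (\<phi> h) / c = 0" "Re (\<phi> h) / c \<le> 1" "- Re (\<phi> h) / c \<le> 1" by (simp_all add: pt)
    then show ?thesis using cp by (auto simp: divide_le_eq le_divide_eq abs_le_iff)
  qed
  have "Im (\<phi> h) = 0" using main[of "norm h + 1"] by simp
  moreover have "\<bar>Re (\<phi> h)\<bar> \<le> norm h"
    by (rule dense_ge) (use main in blast)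
  ultimately show ?thesis by blast
qed

lemma selfadj_norm:
  assumes "star h = h" shows "norm (\<phi> h) \<le> norm h"
proof -
  have "\<phi> h = complex_of_real (Re (\<phi> h))" using selfadj_bound[OF assms] by (simp add: complex_eq_iff)
  then show ?thesis using selfadj_bound[OF assms] by (metis norm_of_real)
qed

lemma phi_bound: "norm (\<phi> x) \<le> 2 * norm x"
proof -
  define h where "h = (1/2) *\<^sub>R (x + star x)"
  define k where "k = sc (- \<i> / 2) (x - star x)"
  have sh: "star h = h" by (simp add: h_def star_scaleR star_add add.commute)
  have "star k = sc (\<i> / 2) (star x - x)" by (simp add: k_def star_sc star_diff)
  also have "\<dots> = - sc (\<i> / 2) (x - star x)" using sc_minus_right[of "\<i>/2" "x - star x"] by simp
  also have "\<dots> = k" unfolding k_def using sc_minus_left[of "\<i>/2" "x - star x"] by simp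
  finally have sk: "star k = k" .
  have "sc \<i> k = sc (1/2) (x - star x)" by (simp add: k_def sc_sc)
  also have "\<dots> = (1/2) *\<^sub>R (x - star x)" using sc_real[of "1/2" "x - star x"] by simp
  finally have e1: "sc \<i> k = (1/2) *\<^sub>R (x - star x)" .
  have "h + sc \<i> k = (1/2) *\<^sub>R ((x + star x) + (x - star x))" unfolding e1 h_def by (simp only: scaleR_add_right)
  also have "(x + star x) + (x - star x) = 2 *\<^sub>R x" by (simp add: scaleR_2)
  finally have "h + sc \<i> k = x" by simp
  then have "\<phi> x = \<phi> h + \<i> * \<phi> k" using phi_add[of h "sc \<i> k"] phi_sc[of \<i> k] by simp
  then have "norm (\<phi> x) \<le> norm (\<phi> h) + norm (\<i> * \<phi> k)" using norm_triangle_ineq by metis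
  also have "norm (\<i> * \<phi> k) = norm (\<phi> k)" by (simp add: norm_mult)
  finally have "norm (\<phi> x) \<le> norm (\<phi> h) + norm (\<phi> k)" .
  also have "\<dots> \<le> norm h + norm k" using selfadj_norm[OF sh] selfadj_norm[OF sk] by simp
  also have "norm h \<le> norm x"
  proof -
    have "norm h = (1/2) * norm (x + star x)" by (simp add: h_def)
    also have "\<dots> \<le> (1/2) * (norm x + norm (star x))" by (intro mult_left_mono norm_triangle_ineq) auto
    finally show ?thesis by simp
  qed
  also have "norm k \<le> norm x"
  proof -
    have "norm k = (1/2) * norm (x - star x)" by (simp add: k_def norm_sc norm_divide)
    also have "\<dots> \<le> (1/2) * (norm x + norm (star x))" by (intro mult_left_mono norm_triangle_ineq4) auto
    finally show ?thesis by simp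
  qed
  finally show ?thesis by simp
qed

lemma bl_phi: "bounded_linear \<phi>"
proof (rule bounded_linear_intro[where K=2])
  fix x y show "\<phi> (x + y) = \<phi> x + \<phi> y" by (rule phi_add)
next
  fix r x show "\<phi> (r *\<^sub>R x) = r *\<^sub>R \<phi> x" using phi_scaleR[of r x] by (simp only: scaleR_conv_of_real)
next
  fix x show "norm (\<phi> x) \<le> norm x * 2" using phi_bound[of x] by (simp add: mult.commute)
qed

end

lemma cg_sub: "x \<in> S \<Longrightarrow> x \<in> cstar_gen sc star S" unfolding cstar_gen_def by blast
lemma cg_zero: "0 \<in> cstar_gen sc star S" unfolding cstar_gen_def by blast
lemma cg_add: "x \<in> cstar_gen sc star S \<Longrightarrow> y \<in> cstar_gen sc star S \<Longrightarrow> x + y \<in> cstar_gen sc star S"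
  unfolding cstar_gen_def by blast
lemma cg_mult: "x \<in> cstar_gen sc star S \<Longrightarrow> y \<in> cstar_gen sc star S \<Longrightarrow> x * y \<in> cstar_gen sc star S"
  unfolding cstar_gen_def by blast
lemma cg_sc: "x \<in> cstar_gen sc star S \<Longrightarrow> sc c x \<in> cstar_gen sc star S"
  unfolding cstar_gen_def by blast
lemma cg_closed: "closed (cstar_gen sc star S)"
  unfolding cstar_gen_def by (rule closed_Inter) blast
lemma cg_sum: "(\<And>i. i \<in> A \<Longrightarrow> f i \<in> cstar_gen sc star S) \<Longrightarrow> sum f A \<in> cstar_gen sc star S"
  by (induction A rule: infinite_finite_induct) (auto intro: cg_zero cg_add)
lemma cg_sums: "(\<And>n. f n \<in> cstar_gen sc star S) \<Longrightarrow> f sums l \<Longrightarrow> l \<in> cstar_gen sc star S"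
  unfolding sums_def by (rule closed_sequentially[OF cg_closed]) (auto intro: cg_sum)

lemma alt_distinct_Cons:
  "ps \<noteq> [] \<Longrightarrow> p \<noteq> hd ps \<Longrightarrow> alt_distinct ps \<Longrightarrow> alt_distinct (p # ps)"
  unfolding alt_distinct_def
proof (intro allI impI)
  fix k assume ne: "ps \<noteq> []" and h: "p \<noteq> hd ps" and ad: "\<forall>k. Suc k < length ps \<longrightarrow> ps ! k \<noteq> ps ! Suc k"
    and k: "Suc k < length (p # ps)"
  show "(p # ps) ! k \<noteq> (p # ps) ! Suc k"
  proof (cases k)
    case 0 then show ?thesis using ne h by (cases ps) auto
  next
    case (Suc j) then show ?thesis using ad k by auto
  qed
qed

locale msetup = cstate sc star \<phi> for sc :: "complex \<Rightarrow> 'a::{real_normed_algebra_1,banach} \<Rightarrow> 'a" and star \<phi> +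
  fixes b :: "nat \<Rightarrow> 'a" and J :: "(nat \<times> nat) set" and a u :: "nat \<times> nat \<Rightarrow> 'a"
  assumes Jsub: "J \<subseteq> {1,2} \<times> {1,2}"
    and smf: "strongly_matricially_free sc star \<phi> b J a u"
begin

definition Alg where "Alg p = cstar_gen sc star {a p, star (a p), u p}"
definition \<psi> where "\<psi> = mstate star \<phi> b"
definition II where "II = cstar_gen sc star (insert 1 (u ` J))"

lemma finJ: "finite J" using Jsub by (rule finite_subset) simp
lemma cardJ: "card J \<le> 4"
proof -
  have "card J \<le> card ({1,2::nat} \<times> {1,2::nat})" using Jsub by (intro card_mono) auto
  also have "\<dots> = 4" by simp
  finally show ?thesis .
qed

lemma smf_unf: "(\<forall>p\<in>J. star (u p) = u p \<and> u p * u p = u p) \<and>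
     (\<forall>p\<in>J. \<forall>x\<in>Alg p. u p * x = x \<and> x * u p = x) \<and>
     (\<forall>p\<in>J. fst p \<noteq> snd p \<longrightarrow>
        (snd p, snd p) \<in> J \<and> b (snd p) \<in> Alg (snd p, snd p) \<and> \<phi> (b (snd p)) = 0 \<and>
        \<phi> (star (b (snd p)) * b (snd p)) = 1) \<and>
     (\<forall>p\<in>J. \<phi> (u p) = (if fst p = snd p then 1 else 0)) \<and>
     (\<forall>p qs ys x. qs \<noteq> [] \<longrightarrow> set (p # qs) \<subseteq> J \<longrightarrow> alt_distinct (p # qs) \<longrightarrow>
        length ys = length qs \<longrightarrow>
        (\<forall>k<length qs. ys ! k \<in> Alg (qs ! k) \<and> \<psi> (qs ! k) (ys ! k) = 0) \<longrightarrow>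
        \<phi> (x * u p * prod_list ys) =
          (if in_Gamma (p # qs) then \<phi> (x * prod_list ys) else 0)) \<and>
     (\<forall>ps xs. ps \<noteq> [] \<longrightarrow> set ps \<subseteq> J \<longrightarrow> alt_distinct ps \<longrightarrow> length xs = length ps \<longrightarrow>
        (\<forall>k<length ps. xs ! k \<in> Alg (ps ! k) \<and> \<psi> (ps ! k) (xs ! k) = 0) \<longrightarrow>
        \<phi> (prod_list xs) = 0)"
  using smf unfolding strongly_matricially_free_def Let_def Alg_def[symmetric] \<psi>_def[symmetric]
  by (elim conjE) (intro conjI; assumption)

lemma u_idem: "p \<in> J \<Longrightarrow> u p * u p = u p" using smf_unf by blast
lemma u_star: "p \<in> J \<Longrightarrow> star (u p) = u p" using smf_unf by blast
lemma u_unit: "p \<in> J \<Longrightarrow> x \<in> Alg p \<Longrightarrow> u p * x = x \<and> x * u p = x" using smf_unf by blast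
lemma b_facts: "p \<in> J \<Longrightarrow> fst p \<noteq> snd p \<Longrightarrow> (snd p, snd p) \<in> J \<and> b (snd p) \<in> Alg (snd p, snd p) \<and> \<phi> (b (snd p)) = 0 \<and>
        \<phi> (star (b (snd p)) * b (snd p)) = 1" using smf_unf by blast
lemma phi_u: "p \<in> J \<Longrightarrow> \<phi> (u p) = (if fst p = snd p then 1 else 0)" using smf_unf by blast
lemma condc: "qs \<noteq> [] \<Longrightarrow> set (p # qs) \<subseteq> J \<Longrightarrow> alt_distinct (p # qs) \<Longrightarrow>
        length ys = length qs \<Longrightarrow>
        (\<forall>k<length qs. ys ! k \<in> Alg (qs ! k) \<and> \<psi> (qs ! k) (ys ! k) = 0) \<Longrightarrow>
        \<phi> (x * u p * prod_list ys) =
          (if in_Gamma (p # qs) then \<phi> (x * prod_list ys) else 0)"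
  using smf_unf by blast
lemma condd: "ps \<noteq> [] \<Longrightarrow> set ps \<subseteq> J \<Longrightarrow> alt_distinct ps \<Longrightarrow> length xs = length ps \<Longrightarrow>
        (\<forall>k<length ps. xs ! k \<in> Alg (ps ! k) \<and> \<psi> (ps ! k) (xs ! k) = 0) \<Longrightarrow>
        \<phi> (prod_list xs) = 0"
  using smf_unf by blast

lemma a_Alg: "a p \<in> Alg p" unfolding Alg_def by (rule cg_sub) simp
lemma u_Alg: "u p \<in> Alg p" unfolding Alg_def by (rule cg_sub) simp
lemma ua: "p \<in> J \<Longrightarrow> u p * a p = a p" using u_unit[OF _ a_Alg] by blast
lemma au: "p \<in> J \<Longrightarrow> a p * u p = a p" using u_unit[OF _ a_Alg] by blast

lemma norm_u: "p \<in> J \<Longrightarrow> norm (u p) \<le> 1"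
proof -
  assume p: "p \<in> J"
  have "(norm (u p))^2 = norm (u p)" using cstar_id[of "u p"] u_star[OF p] u_idem[OF p] by simp
  then have "norm (u p) * (norm (u p) - 1) = 0" by (simp add: power2_eq_square algebra_simps)
  then show ?thesis by auto
qed

lemma bl_psi: "bounded_linear (\<psi> p)"
proof (cases "fst p = snd p")
  case True
  then have "\<psi> p = \<phi>" by (simp add: \<psi>_def mstate_def[abs_def])
  then show ?thesis using bl_phi by simp
next
  case False
  then have e: "\<psi> p = (\<lambda>x. \<phi> ((star (b (snd p)) * x) * b (snd p)))" by (simp add: \<psi>_def mstate_def[abs_def])
  show ?thesis unfolding e
    by (intro bounded_linear_compose[OF bl_phi] bounded_linear_compose[OF bounded_linear_mult_left] bounded_linear_mult_right)
qed

lemma psi_sc: "\<psi> p (sc c x) = c * \<psi> p x"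
  by (simp add: \<psi>_def mstate_def phi_sc sc_mult_left[symmetric] sc_mult_right[symmetric])

lemma psi_u: assumes p: "p \<in> J" shows "\<psi> p (u p) = 1"
proof (cases "fst p = snd p")
  case True then show ?thesis using phi_u[OF p] by (simp add: \<psi>_def mstate_def)
next
  case False
  define j where "j = snd p"
  from b_facts[OF p False] have bj: "(j, j) \<in> J" "b j \<in> Alg (j, j)" "\<phi> (b j) = 0" "\<phi> (star (b j) * b j) = 1"
    by (simp_all add: j_def)
  have psijj: "\<psi> (j, j) (b j) = 0" using bj by (simp add: \<psi>_def mstate_def)
  have ne: "p \<noteq> (j, j)" using False by (cases p) (auto simp: j_def)
  have ad: "alt_distinct [p, (j, j)]" using ne by (simp add: alt_distinct_def nth_Cons split: nat.split)
  have g: "in_Gamma [p, (j, j)]" using False by (auto simp: in_Gamma_def j_def nth_Cons split: nat.split)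
  have "\<phi> (star (b j) * u p * prod_list [b j]) = (if in_Gamma [p, (j, j)] then \<phi> (star (b j) * prod_list [b j]) else 0)"
    by (rule condc) (use p bj psijj ad in auto)
  then show ?thesis using g bj by (simp add: \<psi>_def mstate_def False j_def)
qed



inductive Lw :: "(nat \<times> nat \<Rightarrow> 'a::{real_normed_algebra_1,banach}) \<Rightarrow> nat \<times> nat \<Rightarrow> 'a \<Rightarrow> bool" for P where
  Lw_base: "p \<in> J \<Longrightarrow> Lw P p (P p)"
| Lw_step: "p \<in> J \<Longrightarrow> q \<in> J \<Longrightarrow> q \<noteq> p \<Longrightarrow> Lw P q y \<Longrightarrow> Lw P p (P p * y)"

lemma Lw_word: "Lw P p x \<Longrightarrow> \<exists>ps. ps \<noteq> [] \<and> hd ps = p \<and> set ps \<subseteq> J \<and> alt_distinct ps \<and> x = prod_list (map P ps)"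
proof (induction rule: Lw.induct)
  case (Lw_base p)
  then show ?case by (intro exI[of _ "[p]"]) (auto simp: alt_distinct_def)
next
  case (Lw_step p q y)
  then obtain ps where ps: "ps \<noteq> []" "hd ps = q" "set ps \<subseteq> J" "alt_distinct ps" "y = prod_list (map P ps)" by blast
  show ?case
    by (intro exI[of _ "p # ps"]) (use ps Lw_step.hyps in \<open>auto intro: alt_distinct_Cons\<close>)
qed

lemma phi_Lw:
  assumes hyp: "\<forall>p\<in>J. P p \<in> Alg p \<and> \<psi> p (P p) = 0" and L: "Lw P p x"
  shows "\<phi> x = 0"
proof -
  obtain ps where ps: "ps \<noteq> []" "set ps \<subseteq> J" "alt_distinct ps" "x = prod_list (map P ps)"
    using Lw_word[OF L] by blast
  have "\<phi> (prod_list (map P ps)) = 0"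
  proof (rule condd[OF ps(1) ps(2) ps(3)])
    show "length (map P ps) = length ps" by simp
    show "\<forall>k<length ps. map P ps ! k \<in> Alg (ps ! k) \<and> \<psi> (ps ! k) (map P ps ! k) = 0"
      using hyp ps(2) nth_mem by fastforce
  qed
  then show ?thesis using ps by simp
qed

inductive Sp :: "(nat \<times> nat \<Rightarrow> 'a::{real_normed_algebra_1,banach}) \<Rightarrow> nat \<times> nat \<Rightarrow> 'a \<Rightarrow> bool" for P where
  Sp_zero: "Sp P p 0"
| Sp_add: "Lw P p x \<Longrightarrow> Sp P p y \<Longrightarrow> Sp P p (x + y)"

lemma Sp_plus: "Sp P p x \<Longrightarrow> Sp P p y \<Longrightarrow> Sp P p (x + y)"
  by (induction rule: Sp.induct) (auto simp: add.assoc intro: Sp_add)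

lemma Sp_sum: "(\<And>i. i \<in> A \<Longrightarrow> Sp P p (f i)) \<Longrightarrow> Sp P p (sum f A)"
  by (induction A rule: infinite_finite_induct) (auto intro: Sp_zero Sp_plus)

lemma Sp_mult: "Sp P q y \<Longrightarrow> p \<in> J \<Longrightarrow> q \<in> J \<Longrightarrow> q \<noteq> p \<Longrightarrow> Sp P p (P p * y)"
proof (induction rule: Sp.induct)
  case Sp_zero then show ?case by (simp add: Sp.Sp_zero)
next
  case (Sp_add x y) then show ?case by (simp add: distrib_left Sp.Sp_add Lw_step)
qed

lemma phi_Sp: "Sp P p x \<Longrightarrow> \<forall>p\<in>J. P p \<in> Alg p \<and> \<psi> p (P p) = 0 \<Longrightarrow> \<phi> x = 0"
  by (induction rule: Sp.induct) (auto simp: phi_add phi_Lw)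

lemma fix_phi:
  assumes hyp: "\<forall>p\<in>J. P p \<in> Alg p \<and> \<psi> p (P p) = 0"
    and sumP: "(\<Sum>p\<in>J. norm (P p)) < 1"
    and fx: "\<forall>p\<in>J. W p = P p * (1 + (\<Sum>q\<in>J-{p}. W q))"
  shows "\<forall>p\<in>J. \<phi> (W p) = 0"
proof
  fix p0 assume p0: "p0 \<in> J"
  define F where "F f p = P p * (1 + (\<Sum>q\<in>J-{p}. f q))" for f p
  define V where "V k = (F ^^ k) (\<lambda>p. 0)" for k
  have VS: "V (Suc k) p = P p * (1 + (\<Sum>q\<in>J-{p}. V k q))" for k p by (simp add: V_def F_def)
  have Vsp: "\<forall>p\<in>J. Sp P p (V k p)" for k
  proof (induction k)
    case 0 then show ?case by (simp add: V_def Sp_zero)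
  next
    case (Suc k)
    show ?case
    proof
      fix p assume p: "p \<in> J"
      have "V (Suc k) p = P p + (\<Sum>q\<in>J-{p}. P p * V k q)" by (simp add: VS distrib_left sum_distrib_left)
      moreover have "Sp P p (P p)" using Sp_add[OF Lw_base[OF p] Sp_zero] by simp
      moreover have "Sp P p (\<Sum>q\<in>J-{p}. P p * V k q)"
        by (rule Sp_sum) (use Suc p in \<open>auto intro: Sp_mult\<close>)
      ultimately show "Sp P p (V (Suc k) p)" by (simp add: Sp_plus)
    qed
  qed
  define c where "c = (\<Sum>p\<in>J. norm (P p))"
  define e where "e k = (\<Sum>p\<in>J. norm (V k p - W p))" for k
  have c0: "0 \<le> c" by (simp add: c_def sum_nonneg)
  have e0: "0 \<le> e k" for k by (simp add: e_def sum_nonneg)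
  have estep: "e (Suc k) \<le> c * e k" for k
  proof -
    have "norm (V (Suc k) p - W p) \<le> norm (P p) * e k" if p: "p \<in> J" for p
    proof -
      have "V (Suc k) p - W p = P p * (\<Sum>q\<in>J-{p}. V k q - W q)"
        using fx p by (simp add: VS algebra_simps sum_subtractf)
      then have "norm (V (Suc k) p - W p) \<le> norm (P p) * norm (\<Sum>q\<in>J-{p}. V k q - W q)"
        by (simp add: norm_mult_ineq)
      also have "norm (\<Sum>q\<in>J-{p}. V k q - W q) \<le> (\<Sum>q\<in>J-{p}. norm (V k q - W q))" by (rule norm_sum)
      also have "\<dots> \<le> e k" unfolding e_def by (rule sum_mono2) (auto simp: finJ)
      finally show ?thesis by (simp add: mult_left_mono)
    qed
    then have "e (Suc k) \<le> (\<Sum>p\<in>J. norm (P p) * e k)" unfolding e_def[of "Suc k"] by (intro sum_mono) auto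
    also have "\<dots> = c * e k" by (simp add: c_def sum_distrib_right)
    finally show ?thesis .
  qed
  have ek: "e k \<le> c ^ k * e 0" for k
  proof (induction k)
    case (Suc k)
    have "e (Suc k) \<le> c * e k" by (rule estep)
    also have "\<dots> \<le> c * (c ^ k * e 0)" using Suc c0 by (simp add: mult_left_mono)
    finally show ?case by (simp add: mult_ac)
  qed simp
  have bnd: "norm (\<phi> (W p0)) \<le> 2 * e 0 * c ^ k" for k
  proof -
    have "\<phi> (V k p0) = 0" using phi_Sp[OF _ hyp] Vsp p0 by blast
    then have "\<phi> (W p0) = - \<phi> (V k p0 - W p0)" by (simp add: phi_diff)
    then have "norm (\<phi> (W p0)) \<le> 2 * norm (V k p0 - W p0)" using phi_bound[of "V k p0 - W p0"] by simp
    also have "norm (V k p0 - W p0) \<le> e k" unfolding e_def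
      by (rule member_le_sum) (auto simp: p0 finJ)
    finally show ?thesis using ek[of k] by (simp add: mult_ac)
  qed
  have "(\<lambda>k. 2 * e 0 * c ^ k) \<longlonglongrightarrow> 2 * e 0 * 0"
    using c0 sumP by (intro tendsto_intros LIMSEQ_power_zero) (simp add: c_def)
  then have "(\<lambda>k. 2 * e 0 * c ^ k) \<longlonglongrightarrow> 0" by simp
  then have "norm (\<phi> (W p0)) \<le> 0"
    by (rule LIMSEQ_le_const) (use bnd in auto)
  then show "\<phi> (W p0) = 0" by simp
qed


lemma psi_one: "p \<in> J \<Longrightarrow> \<psi> p 1 = 1"
  using b_facts[of p] by (auto simp: \<psi>_def mstate_def)

lemma psi_diff: "\<psi> p (x - y) = \<psi> p x - \<psi> p y"
  by (rule linear_diff[OF bounded_linear.linear[OF bl_psi]])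

lemma sc_mult_sc: "sc c y * sc d w = sc (c * d) (y * w)"
  by (metis sc_mult_left sc_mult_right sc_sc mult.commute)

lemma sc_pow: "(sc c y) ^ n = sc (c ^ n) (y ^ n)"
  by (induction n) (auto simp: sc_mult_sc)

lemma resolvent:
  assumes p: "p \<in> J" and z: "z \<noteq> 0" and hs: "cmod (z * R) \<le> 1/64" and ha: "cmod z * norm (a p) \<le> 1/64"
    and feq: "(\<lambda>n. \<psi> p (a p ^ n) * inverse (1/z + R) ^ Suc n) sums z"
  shows "\<exists>P. P \<in> Alg p \<and> \<psi> p P = 0 \<and> norm P \<le> 1/8 \<and> (sc R (u p) - a p) * (1 + P) = - sc (1/z) P"
proof -
  define \<omega> where "\<omega> = 1/z + R"
  define lm where "lm = inverse \<omega>"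
  have zw: "z * \<omega> = 1 + z * R" using z by (simp add: \<omega>_def field_simps)
  have n1: "cmod (1 + z * R) \<ge> 63/64"
    using norm_triangle_ineq2[of 1 "- (z * R)"] hs by (simp add: norm_minus_cancel)
  then have w0: "\<omega> \<noteq> 0" using zw by auto
  have nz1: "1 + z * R \<noteq> 0" using n1 by auto
  have "\<omega> = (1 + z * R) / z" using zw z by (simp add: field_simps)
  then have lam: "cmod lm = cmod z / cmod (1 + z * R)"
    by (simp add: lm_def norm_inverse norm_divide)
  have lamb: "cmod lm \<le> 64/63 * cmod z"
  proof -
    have "cmod z / cmod (1 + z * R) \<le> cmod z / (63/64)"
      by (rule divide_left_mono) (use n1 in auto)
    then show ?thesis using lam by simp
  qed
  define x where "x = sc lm (a p)"
  have nx: "norm x \<le> 1/63"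
  proof -
    have "norm x = cmod lm * norm (a p)" by (simp add: x_def norm_sc)
    also have "\<dots> \<le> 64/63 * cmod z * norm (a p)" by (intro mult_right_mono lamb) auto
    also have "\<dots> \<le> 64/63 * (1/64)" using ha by (simp add: mult.assoc)
    finally show ?thesis by simp
  qed
  then have nx1: "norm x < 1" by simp
  define N where "N = (\<Sum>n. x ^ n)"
  note neu = neumann[OF nx1, folded N_def]
  define up where "up = u p"
  define K where "K = up * sc lm N"
  define P where "P = sc (1/z) K - up"
  have uu: "up * up = up" using u_idem[OF p] by (simp add: up_def)
  have ua': "up * a p = a p" "a p * up = a p" using ua[OF p] au[OF p] by (simp_all add: up_def)
  have uxn: "up * x ^ n \<in> Alg p" for n
  proof (induction n)
    case 0 then show ?case by (simp add: up_def u_Alg)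
  next
    case (Suc n)
    have "up * x ^ Suc n = (up * x ^ n) * x" by (simp add: power_Suc2 mult.assoc del: power_Suc)
    moreover have "x \<in> Alg p" unfolding x_def Alg_def by (rule cg_sc) (simp add: cg_sub)
    ultimately show ?case using Suc by (simp add: Alg_def cg_mult)
  qed
  have uNs: "(\<lambda>n. up * x ^ n) sums (up * N)"
    using bounded_linear.sums[OF bounded_linear_mult_right neu(2)] by simp
  have uN: "up * N \<in> Alg p" using cg_sums[OF _ uNs] uxn unfolding Alg_def by blast
  have KA: "K \<in> Alg p" using cg_sc[OF uN[unfolded Alg_def]] unfolding K_def Alg_def by (simp add: sc_mult_right)
  have PA: "P \<in> Alg p"
  proof -
    have "P = sc (1/z) K + sc (-1) up" by (simp add: P_def sc_minus_left)
    then show ?thesis using KA u_Alg[of p] unfolding Alg_def up_def by (simp add: cg_add cg_sc)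
  qed
  have psK: "\<psi> p K = z"
  proof -
    have Ks: "(\<lambda>n. sc lm (up * x ^ n)) sums K"
      using bounded_linear.sums[OF bl_sc uNs] by (simp add: K_def sc_mult_right)
    have "(\<lambda>n. \<psi> p (sc lm (up * x ^ n))) sums \<psi> p K" by (rule bounded_linear.sums[OF bl_psi Ks])
    moreover have "\<psi> p (sc lm (up * x ^ n)) = \<psi> p (a p ^ n) * inverse (1/z + R) ^ Suc n" for n
    proof -
      have ea: "\<psi> p (up * a p ^ n) = \<psi> p (a p ^ n)"
      proof (cases n)
        case 0 then show ?thesis using psi_u[OF p] psi_one[OF p] by (simp add: up_def)
      next
        case (Suc m) then show ?thesis by (simp add: mult.assoc[symmetric] ua')
      qed
      have "\<psi> p (sc lm (up * x ^ n)) = lm * lm ^ n * \<psi> p (up * a p ^ n)"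
        by (simp add: psi_sc x_def sc_pow sc_mult_right[symmetric])
      then show ?thesis using ea by (simp add: lm_def \<omega>_def mult_ac)
    qed
    ultimately have "(\<lambda>n. \<psi> p (a p ^ n) * inverse (1/z + R) ^ Suc n) sums \<psi> p K" by simp
    then show ?thesis using feq sums_unique2 by blast
  qed
  have psP: "\<psi> p P = 0"
    using psK psi_u[OF p] z by (simp add: P_def psi_diff psi_sc up_def)
  define Y where "Y = sc \<omega> up - a p"
  have uP: "up * P = P" by (simp add: P_def K_def sc_mult_right[symmetric] algebra_simps uu mult.assoc[symmetric])
  have Yu: "Y * up = Y" by (simp add: Y_def algebra_simps ua' sc_mult_left[symmetric] uu)
  have Y1: "Y = up * (sc \<omega> 1 - a p)"
    by (simp add: Y_def algebra_simps ua' sc_mult_right[symmetric])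
  have s1: "sc lm (sc \<omega> 1 - a p) = 1 - x"
    using w0 by (simp add: sc_diff_right sc_sc x_def lm_def)
  have "(sc \<omega> 1 - a p) * sc lm N = sc lm (sc \<omega> 1 - a p) * N"
    by (simp add: sc_mult_left[symmetric] sc_mult_right[symmetric])
  also have "\<dots> = 1" using s1 neu(3) by simp
  finally have inv1: "(sc \<omega> 1 - a p) * sc lm N = 1" .
  have YK: "Y * K = up"
  proof -
    have "Y * K = (Y * up) * sc lm N" by (simp add: K_def mult.assoc)
    also have "\<dots> = Y * sc lm N" by (simp only: Yu)
    also have "\<dots> = up * ((sc \<omega> 1 - a p) * sc lm N)" by (simp only: Y1 mult.assoc)
    finally show ?thesis using inv1 by simp
  qed
  have YP: "Y * P = sc (1/z) up - Y"
    by (simp add: P_def algebra_simps sc_mult_right[symmetric] YK Yu)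
  have sP: "sc (1/z) up * P = sc (1/z) P" by (simp add: sc_mult_left[symmetric] uP)
  have RY: "sc R up - a p = Y - sc (1/z) up"
    by (simp add: Y_def \<omega>_def sc_add_left)
  have "(sc R up - a p) * (1 + P) = Y + Y * P - sc (1/z) up - sc (1/z) up * P"
    unfolding RY by (simp add: algebra_simps)
  also have "\<dots> = - sc (1/z) P" by (simp add: YP sP)
  finally have ident: "(sc R (u p) - a p) * (1 + P) = - sc (1/z) P" by (simp add: up_def)
  define \<kappa> where "\<kappa> = 1/z * lm"
  have Pe: "P = up * (sc \<kappa> N - 1)"
    by (simp add: P_def K_def \<kappa>_def sc_mult_right[symmetric] sc_sc algebra_simps)
  have k1: "cmod (\<kappa> - 1) \<le> 1/63"
  proof -
    have "\<kappa> = inverse (1 + z * R)" using zw z w0 by (simp add: \<kappa>_def lm_def field_simps)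
    then have "\<kappa> - 1 = - (z * R) / (1 + z * R)" using nz1 by (auto simp: field_simps)
    then have "cmod (\<kappa> - 1) = cmod (z * R) / cmod (1 + z * R)" by (simp add: norm_divide)
    also have "\<dots> \<le> (1/64) / (63/64)" by (intro frac_le hs n1) auto
    finally show ?thesis by simp
  qed
  have N1: "N - 1 = x * N" using neu(3) by (simp add: algebra_simps)
  have "sc \<kappa> N - 1 = sc (\<kappa> - 1) N + x * N" by (simp add: sc_diff_left N1[symmetric])
  then have "norm (sc \<kappa> N - 1) \<le> cmod (\<kappa> - 1) * norm N + norm x * norm N"
    by (metis norm_sc norm_mult_ineq norm_triangle_le add_mono order_refl)
  also have "\<dots> = (cmod (\<kappa> - 1) + norm x) * norm N" by (simp add: algebra_simps)
  also have "\<dots> \<le> (1/63 + 1/63) * (1 / (1 - 1/63))"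
  proof (rule mult_mono)
    show "cmod (\<kappa> - 1) + norm x \<le> 1/63 + 1/63" using k1 nx by simp
    have "1 / (1 - norm x) \<le> 1 / (1 - 1/63)" using nx by (intro divide_left_mono) auto
    then show "norm N \<le> 1 / (1 - 1/63)" using neu(5) by simp
  qed auto
  finally have nk: "norm (sc \<kappa> N - 1) \<le> 1/8" by simp
  have "norm P \<le> norm up * norm (sc \<kappa> N - 1)" unfolding Pe by (rule norm_mult_ineq)
  also have "\<dots> \<le> 1 * (1/8)" using norm_u[OF p] nk by (intro mult_mono) (auto simp: up_def)
  finally have nP: "norm P \<le> 1/8" by simp
  show ?thesis using PA psP nP ident by blast
qed


lemma sc_cancel: "z \<noteq> 0 \<Longrightarrow> sc z (sc (1/z) v) = v" by (simp add: sc_sc)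
lemma sc_cancel2: "z \<noteq> 0 \<Longrightarrow> sc (1/z) (sc z v) = v" by (simp add: sc_sc)

lemma neu_inv:
  fixes M :: 'a
  assumes "norm M < 1"
  shows "\<exists>Q. (1 + M) * Q = 1 \<and> Q * (1 + M) = 1 \<and> norm Q \<le> 1 / (1 - norm M)"
  using neumann[of "- M"] assms by (intro exI[of _ "\<Sum>n. (- M) ^ n"]) auto

lemma core:
  fixes z :: complex and Rz :: "nat \<times> nat \<Rightarrow> complex" and P :: "nat \<times> nat \<Rightarrow> 'a"
  assumes z: "z \<noteq> 0"
    and Pp: "\<forall>p\<in>J. P p \<in> Alg p \<and> \<psi> p (P p) = 0 \<and> norm (P p) \<le> 1/8 \<and> (sc (Rz p) (u p) - a p) * (1 + P p) = - sc (1/z) (P p)"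
    and hs: "\<forall>p\<in>J. cmod (z * Rz p) \<le> 1/64"
    and hA: "cmod z * norm (\<Sum>p\<in>J. a p) \<le> 1/2"
  shows "\<exists>binv. sc (1/z) 1 + (\<Sum>p\<in>J. sc (Rz p) (u p)) \<in> II \<and>
        (sc (1/z) 1 + (\<Sum>p\<in>J. sc (Rz p) (u p))) * binv = 1 \<and> binv * (sc (1/z) 1 + (\<Sum>p\<in>J. sc (Rz p) (u p))) = 1 \<and>
        norm binv * norm (\<Sum>p\<in>J. a p) < 1 \<and>
        (\<lambda>n. \<phi> (binv * ((\<Sum>p\<in>J. a p) * binv) ^ n)) sums z"
proof -
  define A where "A = (\<Sum>p\<in>J. a p)"
  define bb where "bb = sc (1/z) 1 + (\<Sum>p\<in>J. sc (Rz p) (u p))"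
  have bbI: "bb \<in> II" unfolding bb_def II_def
    by (intro cg_add cg_sc cg_sum cg_sub) auto
  define M where "M = (\<Sum>p\<in>J. sc (z * Rz p) (u p))"
  have nM: "norm M \<le> 1/16"
  proof -
    have "norm M \<le> (\<Sum>p\<in>J. norm (sc (z * Rz p) (u p)))" unfolding M_def by (rule norm_sum)
    also have "\<dots> \<le> (\<Sum>p\<in>J. 1/64)"
    proof (rule sum_mono)
      fix p assume p: "p \<in> J"
      have "norm (sc (z * Rz p) (u p)) = cmod (z * Rz p) * norm (u p)" by (rule norm_sc)
      also have "\<dots> \<le> 1/64 * 1" using hs p norm_u[OF p] by (intro mult_mono) auto
      finally show "norm (sc (z * Rz p) (u p)) \<le> 1/64" by simp
    qed
    also have "\<dots> = card J / 64" by simp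
    also have "\<dots> \<le> 4 / 64" using cardJ by (intro divide_right_mono) auto
    finally show ?thesis by simp
  qed
  have bbM: "bb = sc (1/z) (1 + M)"
    using z by (simp add: bb_def M_def sc_add_right sc_sum_right sc_sc)
  obtain Q where Q: "(1 + M) * Q = 1" "Q * (1 + M) = 1" "norm Q \<le> 1 / (1 - norm M)"
    using neu_inv[of M] nM by auto
  define binv where "binv = sc z Q"
  have bi1: "bb * binv = 1" using z Q(1) by (simp add: bbM binv_def sc_mult_sc)
  have bi2: "binv * bb = 1" using z Q(2) by (simp add: bbM binv_def sc_mult_sc)
  have nQ: "norm Q \<le> 16/15"
  proof -
    have "1 / (1 - norm M) \<le> 1 / (1 - 1/16)" using nM by (intro divide_left_mono) auto
    then show ?thesis using Q(3) by simp
  qed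
  have nbA: "norm binv * norm A \<le> 8/15"
  proof -
    have "norm binv * norm A = norm Q * (cmod z * norm A)" by (simp add: binv_def norm_sc)
    also have "\<dots> \<le> 16/15 * (1/2)" using nQ hA by (intro mult_mono) (auto simp: A_def)
    finally show ?thesis by simp
  qed
  define T where "T = A * binv"
  have nT: "norm T < 1" using nbA norm_mult_ineq[of A binv] by (simp add: T_def mult.commute)
  define NT where "NT = (\<Sum>n. T ^ n)"
  note neT = neumann[OF nT, folded NT_def]
  define X where "X = binv * NT"
  have Xs: "(\<lambda>n. binv * T ^ n) sums X"
    unfolding X_def by (rule bounded_linear.sums[OF bounded_linear_mult_right neT(2)])
  have phXs: "(\<lambda>n. \<phi> (binv * T ^ n)) sums \<phi> X" by (rule bounded_linear.sums[OF bl_phi Xs])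
  have bAX: "(bb - A) * X = 1"
  proof -
    have "(bb - A) * X = (bb * binv - A * binv) * NT" by (simp add: X_def algebra_simps)
    also have "\<dots> = (1 - T) * NT" by (simp add: bi1 T_def)
    finally show ?thesis using neT(3) by simp
  qed
  define S where "S = sc (1/z) X"
  have XS: "X = sc z S" using z by (simp add: S_def sc_sc)
  have bAS: "(bb - A) * S = sc (1/z) 1" by (simp add: S_def sc_mult_right[symmetric] bAX)
  have "\<forall>p\<in>J. \<exists>Qp. (1 + P p) * Qp = 1 \<and> Qp * (1 + P p) = 1"
  proof
    fix p assume "p \<in> J"
    then have "norm (P p) < 1" using Pp by fastforce
    then show "\<exists>Qp. (1 + P p) * Qp = 1 \<and> Qp * (1 + P p) = 1" using neu_inv[of "P p"] by blast
  qed
  then obtain QQ where QQ: "\<forall>p\<in>J. (1 + P p) * QQ p = 1 \<and> QQ p * (1 + P p) = 1" by metis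
  have comm: "QQ p * P p = P p * QQ p" if p: "p \<in> J" for p
  proof -
    have "QQ p * P p = QQ p * P p * ((1 + P p) * QQ p)" using QQ p by simp
    also have "\<dots> = (QQ p * (1 + P p)) * P p * QQ p" by (simp add: algebra_simps)
    also have "\<dots> = P p * QQ p" using QQ p by simp
    finally show ?thesis .
  qed
  have Dp: "sc (Rz p) (u p) - a p = - sc (1/z) (P p * QQ p)" if p: "p \<in> J" for p
  proof -
    have "sc (Rz p) (u p) - a p = (sc (Rz p) (u p) - a p) * ((1 + P p) * QQ p)" using QQ p by simp
    also have "\<dots> = ((sc (Rz p) (u p) - a p) * (1 + P p)) * QQ p" by (simp add: mult.assoc)
    also have "\<dots> = - sc (1/z) (P p) * QQ p" using Pp p by simp
    finally show ?thesis by (simp add: sc_mult_left)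
  qed
  define W where "W p = QQ p * P p * S" for p
  have bA: "bb - A = sc (1/z) 1 + (\<Sum>p\<in>J. sc (Rz p) (u p) - a p)"
    by (simp add: bb_def A_def sum_subtractf)
  also have "\<dots> = sc (1/z) 1 - (\<Sum>p\<in>J. sc (1/z) (P p * QQ p))"
    using Dp by (simp add: sum_negf)
  finally have "sc (1/z) 1 = (sc (1/z) 1 - (\<Sum>p\<in>J. sc (1/z) (P p * QQ p))) * S" using bAS by simp
  also have "\<dots> = sc (1/z) (S - (\<Sum>p\<in>J. W p))"
    by (simp add: algebra_simps sum_distrib_right sc_mult_left[symmetric] sc_diff_right sc_sum_right W_def comm)
  finally have "sc z (sc (1/z) 1) = sc z (sc (1/z) (S - (\<Sum>p\<in>J. W p)))" by simp
  then have S1: "S = 1 + (\<Sum>p\<in>J. W p)" using z by (simp add: sc_cancel algebra_simps)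
  have fx: "\<forall>p\<in>J. W p = P p * (1 + (\<Sum>q\<in>J-{p}. W q))"
  proof
    fix p assume p: "p \<in> J"
    have "(\<Sum>q\<in>J-{p}. W q) = (\<Sum>q\<in>J. W q) - W p" using p finJ by (simp add: sum_diff1)
    then have e: "P p * (1 + (\<Sum>q\<in>J-{p}. W q)) = P p * S - P p * W p" by (simp add: S1 distrib_left right_diff_distrib)
    have "W p + P p * W p = ((1 + P p) * QQ p) * P p * S" by (simp add: W_def algebra_simps)
    also have "\<dots> = P p * S" using QQ p by simp
    finally show "W p = P p * (1 + (\<Sum>q\<in>J-{p}. W q))" unfolding e by (simp add: algebra_simps)
  qed
  have hyp: "\<forall>p\<in>J. P p \<in> Alg p \<and> \<psi> p (P p) = 0" using Pp by blast
  have sumP: "(\<Sum>p\<in>J. norm (P p)) < 1"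
  proof -
    have "(\<Sum>p\<in>J. norm (P p)) \<le> (\<Sum>p\<in>J. 1/8)" by (rule sum_mono) (use Pp in auto)
    also have "\<dots> = card J / 8" by simp
    also have "\<dots> \<le> 4 / 8" using cardJ by (intro divide_right_mono) auto
    finally show ?thesis by simp
  qed
  have W0: "\<forall>p\<in>J. \<phi> (W p) = 0" by (rule fix_phi[OF hyp sumP fx])
  have "\<phi> S = 1" using W0 by (simp add: S1 phi_add phi_sum)
  then have "\<phi> X = z" by (simp add: XS phi_sc)
  then have "(\<lambda>n. \<phi> (binv * T ^ n)) sums z" using phXs by simp
  then show ?thesis using bbI bi1 bi2 nbA
    by (intro exI[of _ binv]) (auto simp: bb_def[symmetric] A_def[symmetric] T_def[symmetric])
qed

end

lemma (in cstar) bl_scv: "bounded_linear (\<lambda>c. sc c v)"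
proof (rule bounded_linear_intro[where K="norm v"])
  fix c d show "sc (c + d) v = sc c v + sc d v" by (rule sc_add_left)
next
  fix r c show "sc (r *\<^sub>R c) v = r *\<^sub>R sc c v" by (simp add: scaleR_conv_of_real sc_sc[symmetric] sc_real)
next
  fix c show "norm (sc c v) \<le> norm c * norm v" by (simp add: norm_sc)
qed

theorem theorem5p1:
  fixes sc :: "complex \<Rightarrow> 'a::{real_normed_algebra_1,banach} \<Rightarrow> 'a"
    and star :: "'a \<Rightarrow> 'a"
    and \<phi> :: "'a \<Rightarrow> complex"
    and b :: "nat \<Rightarrow> 'a"
    and J :: "(nat \<times> nat) set"
    and a u :: "nat \<times> nat \<Rightarrow> 'a"
    and R :: "nat \<times> nat \<Rightarrow> complex \<Rightarrow> complex"
  assumes alg: "unital_cstar_algebra sc star"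
    and state: "is_state sc star \<phi>"
    and J: "J \<subseteq> {1,2} \<times> {1,2}"
    and smf: "strongly_matricially_free sc star \<phi> b J a u"
    and Rt: "\<forall>p\<in>J. scalar_R_transform (\<lambda>n. mstate star \<phi> b p (a p ^ n)) (R p)"
  shows "op_R_transform sc \<phi> (cstar_gen sc star (insert 1 (u ` J))) (\<Sum>p\<in>J. a p)
           (\<lambda>z. \<Sum>p\<in>J. sc (R p z) (u p))"
proof -
  interpret msetup sc star \<phi> b J a u
    by unfold_locales (rule alg, rule state, rule J, rule smf)
  have "\<forall>p\<in>J. \<exists>r \<epsilon>. \<epsilon> > 0 \<and> (\<forall>z. cmod z < \<epsilon> \<longrightarrow> (\<lambda>n. r n * z ^ n) sums R p z)"
    using Rt unfolding scalar_R_transform_def by blast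
  then obtain r \<epsilon> where hr: "\<forall>p\<in>J. \<epsilon> p > 0 \<and> (\<forall>z. cmod z < \<epsilon> p \<longrightarrow> (\<lambda>n. r p n * z ^ n) sums R p z)"
    by metis
  have feqs: "\<forall>p\<in>J. \<forall>\<^sub>F z in at 0. (\<lambda>n. \<psi> p (a p ^ n) * inverse (1 / z + R p z) ^ Suc n) sums z"
    using Rt unfolding scalar_R_transform_def \<psi>_def by blast
  define \<epsilon>0 where "\<epsilon>0 = Min (insert 1 (\<epsilon> ` J)) / 2"
  have e0pos: "\<epsilon>0 > 0" using hr finJ by (auto simp: \<epsilon>0_def)
  have e0le: "\<epsilon>0 \<le> \<epsilon> p / 2" if "p \<in> J" for p using that finJ by (auto simp: \<epsilon>0_def)
  have absc: "summable (\<lambda>n. norm (r p n * w ^ n))" if p: "p \<in> J" and w: "cmod w \<le> \<epsilon>0" for p w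
  proof -
    have lt: "cmod (complex_of_real (3/4 * \<epsilon> p)) < \<epsilon> p" using hr p by auto
    have "summable (\<lambda>n. r p n * complex_of_real (3/4 * \<epsilon> p) ^ n)"
      using hr p lt sums_summable by blast
    moreover have "cmod w < cmod (complex_of_real (3/4 * \<epsilon> p))"
      using w e0le[OF p] hr p by auto
    ultimately show ?thesis by (rule powser_insidea)
  qed
  define c where "c n = (case n of 0 \<Rightarrow> 0 | Suc m \<Rightarrow> (\<Sum>p\<in>J. sc (r p m) (u p)))" for n
  have part1: "\<forall>n. c (Suc n) \<in> cstar_gen sc star (insert 1 (u ` J))"
  proof
    fix n
    have "sc (r p n) (u p) \<in> cstar_gen sc star (insert 1 (u ` J))" if "p \<in> J" for p
      by (rule cg_sc, rule cg_sub) (use that in blast)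
    then show "c (Suc n) \<in> cstar_gen sc star (insert 1 (u ` J))"
      unfolding c_def by (simp add: cg_sum)
  qed
  have part2: "summable (\<lambda>n. norm (sc (z ^ n) (c (Suc n)))) \<and> (\<lambda>n. sc (z ^ n) (c (Suc n))) sums (\<Sum>p\<in>J. sc (R p z) (u p))"
    if z: "cmod z < \<epsilon>0" for z
  proof
    have ex: "sc (z ^ n) (c (Suc n)) = (\<Sum>p\<in>J. sc (r p n * z ^ n) (u p))" for n
    proof -
      have "sc (z ^ n) (c (Suc n)) = (\<Sum>p\<in>J. sc (z ^ n) (sc (r p n) (u p)))"
        unfolding c_def by (simp only: nat.case sc_sum_right)
      also have "\<dots> = (\<Sum>p\<in>J. sc (r p n * z ^ n) (u p))"
        by (rule sum.cong[OF refl]) (simp only: sc_sc mult.commute)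
      finally show ?thesis .
    qed
    have bnd: "norm (sc (z ^ n) (c (Suc n))) \<le> (\<Sum>p\<in>J. norm (r p n * z ^ n))" for n
    proof -
      have "norm (sc (z ^ n) (c (Suc n))) \<le> (\<Sum>p\<in>J. norm (sc (r p n * z ^ n) (u p)))"
        unfolding ex by (rule norm_sum)
      also have "\<dots> \<le> (\<Sum>p\<in>J. norm (r p n * z ^ n))"
      proof (rule sum_mono)
        fix p assume p: "p \<in> J"
        have "norm (sc (r p n * z ^ n) (u p)) = norm (r p n * z ^ n) * norm (u p)" by (simp add: norm_sc)
        also have "\<dots> \<le> norm (r p n * z ^ n) * 1" using norm_u[OF p] by (intro mult_left_mono) auto
        finally show "norm (sc (r p n * z ^ n) (u p)) \<le> norm (r p n * z ^ n)" by simp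
      qed
      finally show ?thesis .
    qed
    have sg: "summable (\<lambda>n. \<Sum>p\<in>J. norm (r p n * z ^ n))"
      by (rule summable_sum) (use absc z in auto)
    show "summable (\<lambda>n. norm (sc (z ^ n) (c (Suc n))))"
    proof (rule summable_comparison_test'[OF sg])
      fix n :: nat
      show "norm (norm (sc (z ^ n) (c (Suc n)))) \<le> (\<Sum>p\<in>J. norm (r p n * z ^ n))"
        using bnd[of n] by (simp only: real_norm_def abs_norm_cancel)
    qed
    have "(\<lambda>n. \<Sum>p\<in>J. sc (r p n * z ^ n) (u p)) sums (\<Sum>p\<in>J. sc (R p z) (u p))"
    proof (rule sums_sum)
      fix p assume p: "p \<in> J"
      have "(\<lambda>n. r p n * z ^ n) sums R p z" using hr p z e0le[OF p] by auto
      then show "(\<lambda>n. sc (r p n * z ^ n) (u p)) sums sc (R p z) (u p)"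
        by (rule bounded_linear.sums[OF bl_scv])
    qed
    then show "(\<lambda>n. sc (z ^ n) (c (Suc n))) sums (\<Sum>p\<in>J. sc (R p z) (u p))" by (simp add: ex)
  qed
  define Cp where "Cp p = (\<Sum>n. norm (r p n * complex_of_real \<epsilon>0 ^ n))" for p
  have Rb: "cmod (R p z) \<le> Cp p" if p: "p \<in> J" and z: "cmod z < \<epsilon>0" for p z
  proof -
    have s: "(\<lambda>n. r p n * z ^ n) sums R p z" using hr p z e0le[OF p] by auto
    have sa: "summable (\<lambda>n. norm (r p n * z ^ n))" using absc[OF p] z by auto
    have se: "summable (\<lambda>n. norm (r p n * complex_of_real \<epsilon>0 ^ n))" using absc[OF p] e0pos by auto
    have "cmod (R p z) = norm (\<Sum>n. r p n * z ^ n)" using s by (simp add: sums_unique[symmetric])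
    also have "\<dots> \<le> (\<Sum>n. norm (r p n * z ^ n))" by (rule summable_norm[OF sa])
    also have "\<dots> \<le> Cp p" unfolding Cp_def
    proof (rule suminf_le[OF _ sa se])
      fix n
      have "cmod z ^ n \<le> \<epsilon>0 ^ n" using z by (intro power_mono) auto
      then show "norm (r p n * z ^ n) \<le> norm (r p n * complex_of_real \<epsilon>0 ^ n)"
        using e0pos by (simp add: norm_mult norm_power mult_left_mono)
    qed
    finally show ?thesis .
  qed
  define C where "C = (\<Sum>p\<in>J. Cp p) + 1"
  have Cp0: "Cp p \<ge> 0" if "p \<in> J" for p
    unfolding Cp_def by (rule suminf_nonneg) (use absc[OF that, of "complex_of_real \<epsilon>0"] e0pos in auto)
  have CpC: "Cp p \<le> C" if "p \<in> J" for p
  proof -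
    have "Cp p \<le> (\<Sum>p\<in>J. Cp p)" using that finJ Cp0 by (intro member_le_sum) auto
    then show ?thesis by (simp add: C_def)
  qed
  have Cpos: "C > 0" using Cp0 by (simp add: C_def sum_nonneg add_nonneg_pos)
  define Na where "Na = (\<Sum>p\<in>J. norm (a p)) + norm (\<Sum>p\<in>J. a p) + 1"
  have Napos: "Na > 0" by (simp add: Na_def sum_nonneg add_nonneg_pos)
  have aNa: "norm (a p) \<le> Na" if "p \<in> J" for p
  proof -
    have "norm (a p) \<le> (\<Sum>p\<in>J. norm (a p))" using that finJ by (intro member_le_sum) auto
    moreover have "0 \<le> norm (\<Sum>p\<in>J. a p)" by simp
    ultimately show ?thesis unfolding Na_def by linarith
  qed
  have ANa: "norm (\<Sum>p\<in>J. a p) \<le> Na" by (simp add: Na_def sum_nonneg)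
  define \<delta> where "\<delta> = min \<epsilon>0 (min (1 / (64 * C)) (1 / (64 * Na)))"
  have dpos: "\<delta> > 0" using e0pos Cpos Napos by (simp add: \<delta>_def)
  have ev1: "\<forall>\<^sub>F z in at (0::complex). z \<noteq> 0 \<and> cmod z < \<delta>"
    using dpos by (auto simp: eventually_at dist_norm intro!: exI[of _ \<delta>])
  have ev2: "\<forall>\<^sub>F z in at (0::complex). \<forall>p\<in>J. (\<lambda>n. \<psi> p (a p ^ n) * inverse (1 / z + R p z) ^ Suc n) sums z"
    by (rule eventually_ball_finite[OF finJ]) (use feqs in blast)
  have part3: "\<forall>\<^sub>F z in at 0. \<exists>binv.
        sc (1 / z) 1 + (\<Sum>p\<in>J. sc (R p z) (u p)) \<in> cstar_gen sc star (insert 1 (u ` J)) \<and>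
        (sc (1 / z) 1 + (\<Sum>p\<in>J. sc (R p z) (u p))) * binv = 1 \<and> binv * (sc (1 / z) 1 + (\<Sum>p\<in>J. sc (R p z) (u p))) = 1 \<and>
        norm binv * norm (\<Sum>p\<in>J. a p) < 1 \<and>
        (\<lambda>n. \<phi> (binv * ((\<Sum>p\<in>J. a p) * binv) ^ n)) sums z"
  proof (rule eventually_mono[OF eventually_conj[OF ev1 ev2]])
    fix z :: complex
    assume hz: "(z \<noteq> 0 \<and> cmod z < \<delta>) \<and> (\<forall>p\<in>J. (\<lambda>n. \<psi> p (a p ^ n) * inverse (1 / z + R p z) ^ Suc n) sums z)"
    then have z: "z \<noteq> 0" and zd: "cmod z < \<delta>" by auto
    have ze: "cmod z < \<epsilon>0" using zd by (simp add: \<delta>_def)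
    have zC: "cmod z * C \<le> 1/64"
    proof -
      have "cmod z \<le> 1 / (64 * C)" using zd by (simp add: \<delta>_def)
      then show ?thesis using Cpos by (simp add: field_simps)
    qed
    have zN: "cmod z * Na \<le> 1/64"
    proof -
      have "cmod z \<le> 1 / (64 * Na)" using zd by (simp add: \<delta>_def)
      then show ?thesis using Napos by (simp add: field_simps)
    qed
    have hs: "\<forall>p\<in>J. cmod (z * R p z) \<le> 1/64"
    proof
      fix p assume p: "p \<in> J"
      have "cmod (z * R p z) = cmod z * cmod (R p z)" by (simp add: norm_mult)
      also have "\<dots> \<le> cmod z * C" using Rb[OF p ze] CpC[OF p] by (intro mult_left_mono) auto
      finally show "cmod (z * R p z) \<le> 1/64" using zC by simp
    qed
    have ha: "\<forall>p\<in>J. cmod z * norm (a p) \<le> 1/64"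
    proof
      fix p assume p: "p \<in> J"
      have "cmod z * norm (a p) \<le> cmod z * Na" using aNa[OF p] by (intro mult_left_mono) auto
      then show "cmod z * norm (a p) \<le> 1/64" using zN by simp
    qed
    have hA: "cmod z * norm (\<Sum>p\<in>J. a p) \<le> 1/2"
    proof -
      have "cmod z * norm (\<Sum>p\<in>J. a p) \<le> cmod z * Na" using ANa by (intro mult_left_mono) auto
      then show ?thesis using zN by simp
    qed
    have "\<forall>p\<in>J. \<exists>P. P \<in> Alg p \<and> \<psi> p P = 0 \<and> norm P \<le> 1/8 \<and> (sc (R p z) (u p) - a p) * (1 + P) = - sc (1/z) P"
    proof
      fix p assume p: "p \<in> J"
      show "\<exists>P. P \<in> Alg p \<and> \<psi> p P = 0 \<and> norm P \<le> 1/8 \<and> (sc (R p z) (u p) - a p) * (1 + P) = - sc (1/z) P"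
        by (rule resolvent[OF p z]) (use hs ha hz p in auto)
    qed
    then obtain P where Pp: "\<forall>p\<in>J. P p \<in> Alg p \<and> \<psi> p (P p) = 0 \<and> norm (P p) \<le> 1/8 \<and> (sc (R p z) (u p) - a p) * (1 + P p) = - sc (1/z) (P p)"
      by metis
    from core[OF z Pp hs hA] show "\<exists>binv.
        sc (1 / z) 1 + (\<Sum>p\<in>J. sc (R p z) (u p)) \<in> cstar_gen sc star (insert 1 (u ` J)) \<and>
        (sc (1 / z) 1 + (\<Sum>p\<in>J. sc (R p z) (u p))) * binv = 1 \<and> binv * (sc (1 / z) 1 + (\<Sum>p\<in>J. sc (R p z) (u p))) = 1 \<and>
        norm binv * norm (\<Sum>p\<in>J. a p) < 1 \<and>
        (\<lambda>n. \<phi> (binv * ((\<Sum>p\<in>J. a p) * binv) ^ n)) sums z"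
      by (simp add: II_def)
  qed
  show ?thesis unfolding op_R_transform_def
  proof (rule conjI)
    show "\<exists>c \<epsilon>. \<epsilon> > 0 \<and> (\<forall>n. c (Suc n) \<in> cstar_gen sc star (insert 1 (u ` J))) \<and>
        (\<forall>z. cmod z < \<epsilon> \<longrightarrow> summable (\<lambda>n. norm (sc (z ^ n) (c (Suc n)))) \<and>
                                (\<lambda>n. sc (z ^ n) (c (Suc n))) sums (\<Sum>p\<in>J. sc (R p z) (u p)))"
      by (intro exI[of _ c] exI[of _ \<epsilon>0] conjI allI impI e0pos part1 part2)
  qed (rule part3)
qed

end
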